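(* Let $\mathbf{C}$ be a locally small category, $\Omega$ an object, $\Phi\colon\mathbf{C}^{\mathrm{op}}\to\mathbf{Pos}$ a functor whose fibres have all meets preserved by reindexing $f^*=\Phi f$, and $d_\Omega\in\Phi\Omega$. Let $\alpha_Y(S)=\bigwedge_{k\in S}k^*(d_\Omega)$, $\gamma_Y(d)=\{k\in\mathbf{C}(Y,\Omega)\mid d\preceq k^*(d_\Omega)\}$ and $\mathrm{cl}_Y=\gamma_Y\circ\alpha_Y$. Let $F\colon\mathbf{C}\to\mathbf{C}$ be a functor, $(\mathit{ev}_\lambda\colon F\Omega\to\Omega)_{\lambda\in\Lambda}$ morphisms, and $\Lambda_Y(S)=\{\mathit{ev}_\lambda\circ Fh\mid\lambda\in\Lambda,h\in S\}$. Let $X$ be an object and $\mathrm{cl}'_X$ a closure operator on $(\mathcal{P}(\mathbf{C}(X,\Omega)),\subseteq)$ that is a subclosure of $\mathrm{cl}_X$, i.e. $\mathrm{cl}'_X(S)\subseteq\mathrm{cl}_X(S)$ for all $S$. Then $\mathrm{cl}'_X$ is compatible (i.e. $\Lambda_X\circ\mathrm{cl}'_X\circ\mathrm{cl}_X\subseteq\mathrm{cl}_{FX}\circ\Lambda_X\circ\mathrm{cl}'_X$ pointwise) if and only if $\alpha_{FX}(\Lambda_X(\mathrm{cl}'_X(S)))\preceq\alpha_{FX}(\Lambda_X(\mathrm{cl}_X(S)))$ for all $S\subseteq\mathbf{C}(X,\Omega)$.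
   Context: A closure operator is a monotone, idempotent, extensive map. *)

theory Defs
  imports Main
begin

record ('o, 'm) cat =
  Obj :: "'o set"
  Mor :: "'m set"
  Dom :: "'m \<Rightarrow> 'o"
  Cod :: "'m \<Rightarrow> 'o"
  Comp :: "'m \<Rightarrow> 'm \<Rightarrow> 'm"   (* Comp g f = g \<circ> f, defined when Cod f = Dom g *)
  Ident :: "'o \<Rightarrow> 'm"

definition hom :: "('o, 'm) cat \<Rightarrow> 'o \<Rightarrow> 'o \<Rightarrow> 'm set" where
  "hom C X Y = {f \<in> Mor C. Dom C f = X \<and> Cod C f = Y}"

definition category :: "('o, 'm) cat \<Rightarrow> bool" where
  "category C \<longleftrightarrow>
     (\<forall>f\<in>Mor C. Dom C f \<in> Obj C \<and> Cod C f \<in> Obj C) \<and>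
     (\<forall>X\<in>Obj C. Ident C X \<in> hom C X X) \<and>
     (\<forall>f\<in>Mor C. \<forall>g\<in>Mor C. Cod C f = Dom C g \<longrightarrow>
        Comp C g f \<in> hom C (Dom C f) (Cod C g)) \<and>
     (\<forall>f\<in>Mor C. \<forall>g\<in>Mor C. \<forall>h\<in>Mor C. Cod C f = Dom C g \<longrightarrow> Cod C g = Dom C h \<longrightarrow>
        Comp C h (Comp C g f) = Comp C (Comp C h g) f) \<and>
     (\<forall>f\<in>Mor C. Comp C (Ident C (Cod C f)) f = f \<and> Comp C f (Ident C (Dom C f)) = f)"

definition endofunctor :: "('o, 'm) cat \<Rightarrow> ('o \<Rightarrow> 'o) \<Rightarrow> ('m \<Rightarrow> 'm) \<Rightarrow> bool" where
  "endofunctor C Fo Fm \<longleftrightarrow>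
     (\<forall>X\<in>Obj C. Fo X \<in> Obj C) \<and>
     (\<forall>f\<in>Mor C. Fm f \<in> hom C (Fo (Dom C f)) (Fo (Cod C f))) \<and>
     (\<forall>X\<in>Obj C. Fm (Ident C X) = Ident C (Fo X)) \<and>
     (\<forall>f\<in>Mor C. \<forall>g\<in>Mor C. Cod C f = Dom C g \<longrightarrow> Fm (Comp C g f) = Comp C (Fm g) (Fm f))"

definition partial_order_on' :: "'p set \<Rightarrow> ('p \<Rightarrow> 'p \<Rightarrow> bool) \<Rightarrow> bool" where
  "partial_order_on' P le \<longleftrightarrow>
     (\<forall>x\<in>P. le x x) \<and>
     (\<forall>x\<in>P. \<forall>y\<in>P. le x y \<and> le y x \<longrightarrow> x = y) \<and>
     (\<forall>x\<in>P. \<forall>y\<in>P. \<forall>z\<in>P. le x y \<and> le y z \<longrightarrow> le x z)"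

definition is_glb :: "'p set \<Rightarrow> ('p \<Rightarrow> 'p \<Rightarrow> bool) \<Rightarrow> 'p set \<Rightarrow> 'p \<Rightarrow> bool" where
  "is_glb P le A m \<longleftrightarrow> m \<in> P \<and> (\<forall>a\<in>A. le m a) \<and> (\<forall>x\<in>P. (\<forall>a\<in>A. le x a) \<longrightarrow> le x m)"

definition meet :: "'p set \<Rightarrow> ('p \<Rightarrow> 'p \<Rightarrow> bool) \<Rightarrow> 'p set \<Rightarrow> 'p" where
  "meet P le A = (THE m. is_glb P le A m)"

text \<open>Fibre \<Phi> Y is the poset (PhiC Y, le Y); reindexing f^* = Phi f maps \<Phi>(Cod f) to \<Phi>(Dom f).\<close>
definition meet_fibration ::
  "('o, 'm) cat \<Rightarrow> ('o \<Rightarrow> 'p set) \<Rightarrow> ('o \<Rightarrow> 'p \<Rightarrow> 'p \<Rightarrow> bool) \<Rightarrow> ('m \<Rightarrow> 'p \<Rightarrow> 'p) \<Rightarrow> bool" where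
  "meet_fibration C PhiC le Phi \<longleftrightarrow>
     (\<forall>Y\<in>Obj C. partial_order_on' (PhiC Y) (le Y)) \<and>
     (\<forall>Y\<in>Obj C. \<forall>A. A \<subseteq> PhiC Y \<longrightarrow> (\<exists>m. is_glb (PhiC Y) (le Y) A m)) \<and>
     (\<forall>f\<in>Mor C. \<forall>x\<in>PhiC (Cod C f). Phi f x \<in> PhiC (Dom C f)) \<and>
     (\<forall>f\<in>Mor C. \<forall>x\<in>PhiC (Cod C f). \<forall>y\<in>PhiC (Cod C f).
        le (Cod C f) x y \<longrightarrow> le (Dom C f) (Phi f x) (Phi f y)) \<and>
     (\<forall>Y\<in>Obj C. \<forall>x\<in>PhiC Y. Phi (Ident C Y) x = x) \<and>
     (\<forall>f\<in>Mor C. \<forall>g\<in>Mor C. Cod C f = Dom C g \<longrightarrow>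
        (\<forall>x\<in>PhiC (Cod C g). Phi (Comp C g f) x = Phi f (Phi g x))) \<and>
     (\<forall>f\<in>Mor C. \<forall>A. A \<subseteq> PhiC (Cod C f) \<longrightarrow>
        is_glb (PhiC (Dom C f)) (le (Dom C f)) (Phi f ` A) (Phi f (meet (PhiC (Cod C f)) (le (Cod C f)) A)))"

definition alpha ::
  "('o, 'm) cat \<Rightarrow> ('o \<Rightarrow> 'p set) \<Rightarrow> ('o \<Rightarrow> 'p \<Rightarrow> 'p \<Rightarrow> bool) \<Rightarrow> ('m \<Rightarrow> 'p \<Rightarrow> 'p) \<Rightarrow> 'p \<Rightarrow> 'o \<Rightarrow> 'm set \<Rightarrow> 'p" where
  "alpha C PhiC le Phi dO Y S = meet (PhiC Y) (le Y) ((\<lambda>k. Phi k dO) ` S)"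

definition gamma ::
  "('o, 'm) cat \<Rightarrow> ('o \<Rightarrow> 'p \<Rightarrow> 'p \<Rightarrow> bool) \<Rightarrow> ('m \<Rightarrow> 'p \<Rightarrow> 'p) \<Rightarrow> 'o \<Rightarrow> 'p \<Rightarrow> 'o \<Rightarrow> 'p \<Rightarrow> 'm set" where
  "gamma C le Phi Om dO Y d = {k \<in> hom C Y Om. le Y d (Phi k dO)}"

definition cl ::
  "('o, 'm) cat \<Rightarrow> ('o \<Rightarrow> 'p set) \<Rightarrow> ('o \<Rightarrow> 'p \<Rightarrow> 'p \<Rightarrow> bool) \<Rightarrow> ('m \<Rightarrow> 'p \<Rightarrow> 'p) \<Rightarrow> 'o \<Rightarrow> 'p \<Rightarrow> 'o \<Rightarrow> 'm set \<Rightarrow> 'm set" where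
  "cl C PhiC le Phi Om dO Y S = gamma C le Phi Om dO Y (alpha C PhiC le Phi dO Y S)"

definition Lam :: "('o, 'm) cat \<Rightarrow> ('m \<Rightarrow> 'm) \<Rightarrow> 'l set \<Rightarrow> ('l \<Rightarrow> 'm) \<Rightarrow> 'm set \<Rightarrow> 'm set" where
  "Lam C Fm L ev S = {Comp C (ev l) (Fm h) | l h. l \<in> L \<and> h \<in> S}"

definition closure_operator :: "'a set \<Rightarrow> ('a set \<Rightarrow> 'a set) \<Rightarrow> bool" where
  "closure_operator H c \<longleftrightarrow>
     (\<forall>S. S \<subseteq> H \<longrightarrow> c S \<subseteq> H) \<and>
     (\<forall>S T. S \<subseteq> T \<and> T \<subseteq> H \<longrightarrow> c S \<subseteq> c T) \<and>
     (\<forall>S. S \<subseteq> H \<longrightarrow> S \<subseteq> c S) \<and>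
     (\<forall>S. S \<subseteq> H \<longrightarrow> c (c S) = c S)"

end

theory Submission
  imports Defs
begin

lemma glb_unique:
  assumes "partial_order_on' P le" "is_glb P le A m"
  shows "meet P le A = m"
  unfolding meet_def
proof (rule the_equality)
  show "is_glb P le A m" by fact
  fix m' assume "is_glb P le A m'"
  with assms show "m' = m" unfolding is_glb_def partial_order_on'_def by metis
qed

lemma po_trans:
  assumes "partial_order_on' P le" "x \<in> P" "y \<in> P" "z \<in> P" "le x y" "le y z"
  shows "le x z"
proof -
  have "\<forall>x\<in>P. \<forall>y\<in>P. \<forall>z\<in>P. le x y \<and> le y z \<longrightarrow> le x z"
    using assms(1) unfolding partial_order_on'_def by (elim conjE)
  then show ?thesis using assms(2-6) by blast
qed

lemma mf_po: "meet_fibration C PhiC le Phi \<Longrightarrow> Y \<in> Obj C \<Longrightarrow> partial_order_on' (PhiC Y) (le Y)"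
  unfolding meet_fibration_def by simp

lemma co_sub: "closure_operator H c \<Longrightarrow> S \<subseteq> H \<Longrightarrow> c S \<subseteq> H"
  unfolding closure_operator_def by simp

lemma co_ext: "closure_operator H c \<Longrightarrow> S \<subseteq> H \<Longrightarrow> S \<subseteq> c S"
  unfolding closure_operator_def by simp

lemma ef_obj: "endofunctor C Fo Fm \<Longrightarrow> X \<in> Obj C \<Longrightarrow> Fo X \<in> Obj C"
  unfolding endofunctor_def by simp

lemma phi_mem:
  assumes mf: "meet_fibration C PhiC le Phi" and d: "dO \<in> PhiC Om" and k: "k \<in> hom C Y Om"
  shows "Phi k dO \<in> PhiC Y"
proof -
  from k have "k \<in> Mor C" "Dom C k = Y" "Cod C k = Om" unfolding hom_def by auto
  moreover have "\<forall>f\<in>Mor C. \<forall>x\<in>PhiC (Cod C f). Phi f x \<in> PhiC (Dom C f)"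
    using mf unfolding meet_fibration_def by simp
  ultimately show ?thesis using d by metis
qed

lemma alpha_glb:
  assumes mf: "meet_fibration C PhiC le Phi" and Y: "Y \<in> Obj C" and d: "dO \<in> PhiC Om"
    and T: "T \<subseteq> hom C Y Om"
  shows "is_glb (PhiC Y) (le Y) ((\<lambda>k. Phi k dO) ` T) (alpha C PhiC le Phi dO Y T)"
proof -
  have sub: "(\<lambda>k. Phi k dO) ` T \<subseteq> PhiC Y"
  proof
    fix x assume "x \<in> (\<lambda>k. Phi k dO) ` T"
    then obtain k where k: "k \<in> T" "x = Phi k dO" by blast
    then show "x \<in> PhiC Y" using phi_mem[OF mf d] T by blast
  qed
  have "\<forall>Y\<in>Obj C. \<forall>A. A \<subseteq> PhiC Y \<longrightarrow> (\<exists>m. is_glb (PhiC Y) (le Y) A m)"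
    using mf unfolding meet_fibration_def by (elim conjE)
  then obtain m where m: "is_glb (PhiC Y) (le Y) ((\<lambda>k. Phi k dO) ` T) m"
    using Y sub by blast
  have po: "partial_order_on' (PhiC Y) (le Y)" using mf_po[OF mf Y] .
  from glb_unique[OF po m] m show ?thesis unfolding alpha_def by simp
qed

lemma key:
  assumes mf: "meet_fibration C PhiC le Phi" and Y: "Y \<in> Obj C" and d: "dO \<in> PhiC Om"
    and T: "T \<subseteq> hom C Y Om" and U: "U \<subseteq> hom C Y Om"
  shows "T \<subseteq> cl C PhiC le Phi Om dO Y U \<longleftrightarrow>
         le Y (alpha C PhiC le Phi dO Y U) (alpha C PhiC le Phi dO Y T)"
proof -
  note gT = alpha_glb[OF mf Y d T] and gU = alpha_glb[OF mf Y d U]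
  have po: "partial_order_on' (PhiC Y) (le Y)" using mf_po[OF mf Y] .
  have aU: "alpha C PhiC le Phi dO Y U \<in> PhiC Y" using gU unfolding is_glb_def by blast
  show ?thesis
  proof
    assume "T \<subseteq> cl C PhiC le Phi Om dO Y U"
    then have "\<forall>k\<in>T. le Y (alpha C PhiC le Phi dO Y U) (Phi k dO)"
      unfolding cl_def gamma_def by blast
    with gT aU show "le Y (alpha C PhiC le Phi dO Y U) (alpha C PhiC le Phi dO Y T)"
      unfolding is_glb_def by blast
  next
    assume h: "le Y (alpha C PhiC le Phi dO Y U) (alpha C PhiC le Phi dO Y T)"
    show "T \<subseteq> cl C PhiC le Phi Om dO Y U"
    proof
      fix k assume k: "k \<in> T"
      have kP: "Phi k dO \<in> PhiC Y" and l2: "le Y (alpha C PhiC le Phi dO Y T) (Phi k dO)"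
        using gT k phi_mem[OF mf d] T unfolding is_glb_def by auto
      have aT: "alpha C PhiC le Phi dO Y T \<in> PhiC Y" using gT unfolding is_glb_def by blast
      have "le Y (alpha C PhiC le Phi dO Y U) (Phi k dO)"
        using po_trans[OF po aU aT kP h l2] .
      with k T show "k \<in> cl C PhiC le Phi Om dO Y U" unfolding cl_def gamma_def by blast
    qed
  qed
qed

lemma cl_sub: "cl C PhiC le Phi Om dO Y U \<subseteq> hom C Y Om"
  unfolding cl_def gamma_def by blast

lemma cat_comp: "category C \<Longrightarrow> f \<in> Mor C \<Longrightarrow> g \<in> Mor C \<Longrightarrow> Cod C f = Dom C g
   \<Longrightarrow> Comp C g f \<in> hom C (Dom C f) (Cod C g)"
  unfolding category_def by simp

lemma ef_mor: "endofunctor C Fo Fm \<Longrightarrow> f \<in> Mor C \<Longrightarrow> Fm f \<in> hom C (Fo (Dom C f)) (Fo (Cod C f))"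
  unfolding endofunctor_def by simp

lemma Lam_hom:
  assumes cat: "category C" and F: "endofunctor C Fo Fm" and ev: "\<forall>l\<in>L. ev l \<in> hom C (Fo Om) Om"
    and S: "S \<subseteq> hom C X Om"
  shows "Lam C Fm L ev S \<subseteq> hom C (Fo X) Om"
proof
  fix x assume "x \<in> Lam C Fm L ev S"
  then obtain l h where x: "x = Comp C (ev l) (Fm h)" "l \<in> L" "h \<in> S" unfolding Lam_def by blast
  from S x have h: "h \<in> Mor C" "Dom C h = X" "Cod C h = Om" unfolding hom_def by auto
  have Fh: "Fm h \<in> hom C (Fo X) (Fo Om)" using ef_mor[OF F h(1)] h by simp
  from ev x have e: "ev l \<in> hom C (Fo Om) Om" by blast
  have "Comp C (ev l) (Fm h) \<in> hom C (Dom C (Fm h)) (Cod C (ev l))"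
    apply (rule cat_comp[OF cat])
    using Fh e unfolding hom_def by auto
  with Fh e x show "x \<in> hom C (Fo X) Om" unfolding hom_def by auto
qed

lemma Lam_mono: "S \<subseteq> T \<Longrightarrow> Lam C Fm L ev S \<subseteq> Lam C Fm L ev T"
  unfolding Lam_def by blast

lemma cl_idem:
  assumes mf: "meet_fibration C PhiC le Phi" and Y: "Y \<in> Obj C" and d: "dO \<in> PhiC Om"
    and S: "S \<subseteq> hom C Y Om"
  shows "cl C PhiC le Phi Om dO Y (cl C PhiC le Phi Om dO Y S) \<subseteq> cl C PhiC le Phi Om dO Y S"
proof
  fix k assume k: "k \<in> cl C PhiC le Phi Om dO Y (cl C PhiC le Phi Om dO Y S)"
  define A where "A = cl C PhiC le Phi Om dO Y S"
  have Ah: "A \<subseteq> hom C Y Om" unfolding A_def by (rule cl_sub)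
  have kh: "k \<in> hom C Y Om" and l2: "le Y (alpha C PhiC le Phi dO Y A) (Phi k dO)"
    using k unfolding A_def cl_def gamma_def by auto
  have "A \<subseteq> cl C PhiC le Phi Om dO Y S" unfolding A_def by (rule subset_refl)
  then have l1: "le Y (alpha C PhiC le Phi dO Y S) (alpha C PhiC le Phi dO Y A)"
    by (rule iffD1[OF key[OF mf Y d Ah S]])
  have m1: "alpha C PhiC le Phi dO Y S \<in> PhiC Y"
    using alpha_glb[OF mf Y d S] unfolding is_glb_def by (elim conjE)
  have m2: "alpha C PhiC le Phi dO Y A \<in> PhiC Y"
    using alpha_glb[OF mf Y d Ah] unfolding is_glb_def by (elim conjE)
  have m3: "Phi k dO \<in> PhiC Y" by (rule phi_mem[OF mf d kh])
  have "le Y (alpha C PhiC le Phi dO Y S) (Phi k dO)"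
    by (rule po_trans[OF mf_po[OF mf Y] m1 m2 m3 l1 l2])
  with kh show "k \<in> cl C PhiC le Phi Om dO Y S" unfolding cl_def gamma_def by simp
qed

theorem lemma2:
  fixes C :: "('o, 'm) cat"
    and PhiC :: "'o \<Rightarrow> 'p set" and le :: "'o \<Rightarrow> 'p \<Rightarrow> 'p \<Rightarrow> bool" and Phi :: "'m \<Rightarrow> 'p \<Rightarrow> 'p"
    and Om :: 'o and dO :: 'p
    and Fo :: "'o \<Rightarrow> 'o" and Fm :: "'m \<Rightarrow> 'm"
    and L :: "'l set" and ev :: "'l \<Rightarrow> 'm"
    and X :: 'o and cl' :: "'m set \<Rightarrow> 'm set"
  assumes "category C"
    and "Om \<in> Obj C"
    and "meet_fibration C PhiC le Phi"
    and "dO \<in> PhiC Om"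
    and "endofunctor C Fo Fm"
    and "\<forall>l\<in>L. ev l \<in> hom C (Fo Om) Om"
    and "X \<in> Obj C"
    and "closure_operator (hom C X Om) cl'"
    and "\<forall>S. S \<subseteq> hom C X Om \<longrightarrow> cl' S \<subseteq> cl C PhiC le Phi Om dO X S"
  shows "(\<forall>S. S \<subseteq> hom C X Om \<longrightarrow>
            Lam C Fm L ev (cl' (cl C PhiC le Phi Om dO X S))
              \<subseteq> cl C PhiC le Phi Om dO (Fo X) (Lam C Fm L ev (cl' S)))
         \<longleftrightarrow>
         (\<forall>S. S \<subseteq> hom C X Om \<longrightarrow>
            le (Fo X) (alpha C PhiC le Phi dO (Fo X) (Lam C Fm L ev (cl' S)))
                      (alpha C PhiC le Phi dO (Fo X) (Lam C Fm L ev (cl C PhiC le Phi Om dO X S))))"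
proof -
  note cat = assms(1) and mf = assms(3) and d = assms(4) and F = assms(5) and ev = assms(6)
    and X = assms(7) and co = assms(8) and sc = assms(9)
  have FX: "Fo X \<in> Obj C" using ef_obj[OF F X] .
  let ?cl = "cl C PhiC le Phi Om dO X"
  let ?L = "Lam C Fm L ev"
  have cl'h: "\<And>S. S \<subseteq> hom C X Om \<Longrightarrow> cl' S \<subseteq> hom C X Om"
   and ext: "\<And>S. S \<subseteq> hom C X Om \<Longrightarrow> S \<subseteq> cl' S"
    using co_sub[OF co] co_ext[OF co] by auto
  have clh: "\<And>U. ?cl U \<subseteq> hom C X Om" by (rule cl_sub)
  have po: "partial_order_on' (PhiC X) (le X)" using mf_po[OF mf X] .
  have amem: "alpha C PhiC le Phi dO X T \<in> PhiC X" if "T \<subseteq> hom C X Om" for T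
    using alpha_glb[OF mf X d that] unfolding is_glb_def by blast
  have clcl: "?cl (?cl S) \<subseteq> ?cl S" if S: "S \<subseteq> hom C X Om" for S
    using cl_idem[OF mf X d S] .
  show ?thesis
  proof
    assume H: "\<forall>S. S \<subseteq> hom C X Om \<longrightarrow> ?L (cl' (?cl S)) \<subseteq> cl C PhiC le Phi Om dO (Fo X) (?L (cl' S))"
    show "\<forall>S. S \<subseteq> hom C X Om \<longrightarrow>
            le (Fo X) (alpha C PhiC le Phi dO (Fo X) (?L (cl' S)))
                      (alpha C PhiC le Phi dO (Fo X) (?L (?cl S)))"
    proof (intro allI impI)
      fix S assume S: "S \<subseteq> hom C X Om"
      have "?L (?cl S) \<subseteq> ?L (cl' (?cl S))" by (rule Lam_mono[OF ext[OF clh[of S]]])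
      then have "?L (?cl S) \<subseteq> cl C PhiC le Phi Om dO (Fo X) (?L (cl' S))"
        using H[rule_format, OF S] by (rule subset_trans)
      then show "le (Fo X) (alpha C PhiC le Phi dO (Fo X) (?L (cl' S)))
                      (alpha C PhiC le Phi dO (Fo X) (?L (?cl S)))"
        by (rule key[OF mf FX d Lam_hom[OF cat F ev clh[of S]] Lam_hom[OF cat F ev cl'h[OF S]], THEN iffD1])
    qed
  next
    assume H: "\<forall>S. S \<subseteq> hom C X Om \<longrightarrow>
            le (Fo X) (alpha C PhiC le Phi dO (Fo X) (?L (cl' S)))
                      (alpha C PhiC le Phi dO (Fo X) (?L (?cl S)))"
    show "\<forall>S. S \<subseteq> hom C X Om \<longrightarrow> ?L (cl' (?cl S)) \<subseteq> cl C PhiC le Phi Om dO (Fo X) (?L (cl' S))"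
    proof (intro allI impI)
      fix S assume S: "S \<subseteq> hom C X Om"
      have "cl' (?cl S) \<subseteq> ?cl (?cl S)" using sc[rule_format, OF clh[of S]] .
      hence "cl' (?cl S) = ?cl S"
        using ext[OF clh[of S]] clcl[OF S] by (meson subset_antisym subset_trans)
      moreover have "?L (?cl S) \<subseteq> cl C PhiC le Phi Om dO (Fo X) (?L (cl' S))"
        by (rule key[OF mf FX d Lam_hom[OF cat F ev clh[of S]] Lam_hom[OF cat F ev cl'h[OF S]], THEN iffD2], rule H[rule_format, OF S])
      ultimately show "?L (cl' (?cl S)) \<subseteq> cl C PhiC le Phi Om dO (Fo X) (?L (cl' S))" by simp
    qed
  qed
qed

end
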